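(* Let $(M,\cdot,1)$ be a monoid, $\Sigma$ a finite alphabet, and $\ell:\Sigma^*\to M$ an $M$-language. If there exists a factorization $(g,f)$ on $L$ such that the right congruence $\equiv^{(g,f)}_\ell$ on $\Sigma^*$ has finite index, then $\ell$ is a recognizable $M$-language.
   Context: $L$ is the set of all functions $\Sigma^*\to M$; $\varepsilon$ is the empty word. A factorization on $L$ is a pair $(g,f)$ of functions $g:L\to M$, $f:L\to L$ with $g(\ell)\cdot f(\ell)=\ell$ for all $\ell\in L$, where $(m\cdot\ell)(\gamma)=m\cdot\ell(\gamma)$. For a word $\alpha$, $\Delta_\alpha:L\to L$ is $\Delta_\alpha(\ell)(\gamma)=\ell(\alpha\gamma)$. Define $S^{(g,f)}_\varepsilon$ as the identity on $L$ and $S^{(g,f)}_{\alpha\sigma}=f\circ\Delta_\sigma\circ S^{(g,f)}_\alpha$ for $\sigma\in\Sigma$. The relation $\equiv^{(g,f)}_\ell$ is defined by $\alpha\equiv^{(g,f)}_\ell\beta\iff S^{(g,f)}_\alpha(\ell)=S^{(g,f)}_\beta(\ell)$; finite index means finitely many classes. An $M$-DFA is a tuple $(Q,\Sigma,u,i_u,\delta,w,\rho)$ with $Q$ finite nonempty, initial state $u$, initial value $i_u\in M$, $\delta:Q\times\Sigma\to Q$, $w:Q\times\Sigma\to M$, $\rho:Q\to M$; with $q\alpha$ the extended transition and $w^*(q,\varepsilon)=1$, $w^*(q,\alpha\sigma)=w^*(q,\alpha)\cdot w(q\alpha,\sigma)$, it recognizes $\alpha\mapsto i_u\cdot w^*(u,\alpha)\cdot\rho(u\alpha)$.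 Recognizable means recognized by some $M$-DFA. *)

theory Defs
  imports Main
begin

type_synonym ('s, 'm) mlang = "'s list \<Rightarrow> 'm"

definition scal :: "'m::monoid_mult \<Rightarrow> ('s, 'm) mlang \<Rightarrow> ('s, 'm) mlang" where
  "scal m l = (\<lambda>\<gamma>. m * l \<gamma>)"

definition is_factorization ::
  "(('s, 'm::monoid_mult) mlang \<Rightarrow> 'm) \<Rightarrow> (('s, 'm) mlang \<Rightarrow> ('s, 'm) mlang) \<Rightarrow> bool" where
  "is_factorization g f \<longleftrightarrow> (\<forall>l. scal (g l) (f l) = l)"

definition Delta :: "'s list \<Rightarrow> ('s, 'm) mlang \<Rightarrow> ('s, 'm) mlang" where
  "Delta \<alpha> l = (\<lambda>\<gamma>. l (\<alpha> @ \<gamma>))"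

definition S :: "(('s, 'm) mlang \<Rightarrow> ('s, 'm) mlang) \<Rightarrow> 's list \<Rightarrow> ('s, 'm) mlang \<Rightarrow> ('s, 'm) mlang" where
  "S f \<alpha> = foldl (\<lambda>h \<sigma>. f \<circ> Delta [\<sigma>] \<circ> h) id \<alpha>"

lemma S_Nil: "S f [] = id" by (simp add: S_def)
lemma S_snoc: "S f (\<alpha> @ [\<sigma>]) = f \<circ> Delta [\<sigma>] \<circ> S f \<alpha>" by (simp add: S_def)

definition equiv_gf :: "(('s, 'm) mlang \<Rightarrow> ('s, 'm) mlang) \<Rightarrow> ('s, 'm) mlang \<Rightarrow> 's list \<Rightarrow> 's list \<Rightarrow> bool" where
  "equiv_gf f l \<alpha> \<beta> \<longleftrightarrow> S f \<alpha> l = S f \<beta> l"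

definition finite_index :: "('a \<Rightarrow> 'a \<Rightarrow> bool) \<Rightarrow> bool" where
  "finite_index R \<longleftrightarrow> finite (UNIV // {(x, y). R x y})"

definition dstar :: "('q \<Rightarrow> 's \<Rightarrow> 'q) \<Rightarrow> 'q \<Rightarrow> 's list \<Rightarrow> 'q" where
  "dstar \<delta> q \<alpha> = foldl \<delta> q \<alpha>"

text \<open>w*(q,[]) = 1, w*(q, alpha sigma) = w*(q,alpha) * w(q alpha, sigma).\<close>
definition wstar :: "('q \<Rightarrow> 's \<Rightarrow> 'q) \<Rightarrow> ('q \<Rightarrow> 's \<Rightarrow> 'm::monoid_mult) \<Rightarrow> 'q \<Rightarrow> 's list \<Rightarrow> 'm" where
  "wstar \<delta> w q \<alpha> = snd (foldl (\<lambda>(p, m) \<sigma>. (\<delta> p \<sigma>, m * w p \<sigma>)) (q, 1) \<alpha>)"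

definition is_MDFA :: "'q set \<Rightarrow> 'q \<Rightarrow> ('q \<Rightarrow> 's \<Rightarrow> 'q) \<Rightarrow> bool" where
  "is_MDFA Q u \<delta> \<longleftrightarrow> finite Q \<and> u \<in> Q \<and> (\<forall>q\<in>Q. \<forall>\<sigma>. \<delta> q \<sigma> \<in> Q)"

definition MDFA_lang ::
  "'q \<Rightarrow> 'm::monoid_mult \<Rightarrow> ('q \<Rightarrow> 's \<Rightarrow> 'q) \<Rightarrow> ('q \<Rightarrow> 's \<Rightarrow> 'm) \<Rightarrow> ('q \<Rightarrow> 'm) \<Rightarrow> ('s, 'm) mlang" where
  "MDFA_lang u iu \<delta> w \<rho> = (\<lambda>\<alpha>. iu * wstar \<delta> w u \<alpha> * \<rho> (dstar \<delta> u \<alpha>))"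

definition recognizable :: "('s, 'm::monoid_mult) mlang \<Rightarrow> bool" where
  "recognizable l \<longleftrightarrow> (\<exists>(Q::nat set) u iu \<delta> w \<rho>. is_MDFA Q u \<delta> \<and> l = MDFA_lang u iu \<delta> w \<rho>)"

end

theory Submission
  imports Defs
begin

lemma dstar_snoc: "dstar \<delta> q (\<alpha> @ [\<sigma>]) = \<delta> (dstar \<delta> q \<alpha>) \<sigma>"
  by (simp add: dstar_def)

lemma foldl_pair: "foldl (\<lambda>(p, m) \<sigma>. (\<delta> p \<sigma>, m * w p \<sigma>)) (q, 1) \<alpha> = (dstar \<delta> q \<alpha>, wstar \<delta> w q \<alpha>)"
proof (induction \<alpha> rule: rev_induct)
  case Nil show ?case unfolding dstar_def wstar_def foldl_Nil snd_conv ..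
next
  case (snoc x xs)
  define F where "F = (\<lambda>(p, m) \<sigma>. (\<delta> p \<sigma>, (m::'b) * w p \<sigma>))"
  have IH: "foldl F (q, 1) xs = (dstar \<delta> q xs, wstar \<delta> w q xs)" using snoc unfolding F_def .
  have A: "foldl F (q, 1) (xs @ [x]) = (\<delta> (dstar \<delta> q xs) x, wstar \<delta> w q xs * w (dstar \<delta> q xs) x)"
    unfolding foldl_append foldl_Cons foldl_Nil IH unfolding F_def by simp
  have B: "dstar \<delta> q (xs @ [x]) = \<delta> (dstar \<delta> q xs) x" unfolding dstar_def by simp
  have C: "wstar \<delta> w q (xs @ [x]) = snd (foldl F (q, 1) (xs @ [x]))" unfolding wstar_def F_def ..
  show ?case unfolding F_def[symmetric] A B C by simp
qed

lemma wstar_snoc: "wstar \<delta> w q (\<alpha> @ [\<sigma>]) = wstar \<delta> w q \<alpha> * w (dstar \<delta> q \<alpha>) \<sigma>"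
proof -
  define F where "F = (\<lambda>(p, m) \<sigma>. (\<delta> p \<sigma>, m * w p \<sigma>))"
  have IH: "foldl F (q, 1) \<alpha> = (dstar \<delta> q \<alpha>, wstar \<delta> w q \<alpha>)" using foldl_pair unfolding F_def .
  have A: "foldl F (q, 1) (\<alpha> @ [\<sigma>]) = (\<delta> (dstar \<delta> q \<alpha>) \<sigma>, wstar \<delta> w q \<alpha> * w (dstar \<delta> q \<alpha>) \<sigma>)"
    unfolding foldl_append foldl_Cons foldl_Nil IH unfolding F_def by simp
  have C: "wstar \<delta> w q (\<alpha> @ [\<sigma>]) = snd (foldl F (q, 1) (\<alpha> @ [\<sigma>]))" unfolding wstar_def F_def ..
  show ?thesis unfolding C A by simp
qed

theorem corollary1:
  fixes l :: "'s::finite list \<Rightarrow> 'm::monoid_mult"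
  assumes "\<exists>g f. is_factorization g f \<and> finite_index (equiv_gf f l)"
  shows "recognizable l"
proof -
  obtain g f where fac: "is_factorization g f" and fi: "finite_index (equiv_gf f l)"
    using assms by blast
  define R where "R = {(x, y). equiv_gf f l x y}"
  define T where "T = range (\<lambda>\<alpha>. S f \<alpha> l)"
  have "T \<subseteq> (\<lambda>C. S f (SOME \<alpha>. \<alpha> \<in> C) l) ` (UNIV // R)"
  proof
    fix X assume "X \<in> T"
    then obtain \<alpha> where X: "X = S f \<alpha> l" by (auto simp: T_def)
    have C: "R `` {\<alpha>} \<in> UNIV // R" by (auto simp: quotient_def)
    have "\<alpha> \<in> R `` {\<alpha>}" by (simp add: R_def equiv_gf_def)
    then have "(SOME \<beta>. \<beta> \<in> R `` {\<alpha>}) \<in> R `` {\<alpha>}" by (rule someI)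
    then have "S f (SOME \<beta>. \<beta> \<in> R `` {\<alpha>}) l = X" by (simp add: R_def equiv_gf_def X)
    then show "X \<in> (\<lambda>C. S f (SOME \<alpha>. \<alpha> \<in> C) l) ` (UNIV // R)" using C by force
  qed
  moreover have "finite (UNIV // R)" using fi by (simp add: finite_index_def R_def)
  ultimately have finT: "finite T" by (meson finite_imageI finite_subset)
  obtain h :: "('s, 'm) mlang \<Rightarrow> nat" and n where hT: "h ` T = {i. i < n}" and inj: "inj_on h T"
    using finite_imp_inj_to_nat_seg[OF finT] by blast
  define dec where "dec = inv_into T h"
  have dec_h: "dec (h X) = X" if "X \<in> T" for X using inj that by (simp add: dec_def)
  define \<delta> where "\<delta> = (\<lambda>q \<sigma>. h (f (Delta [\<sigma>] (dec q))))"
  define w where "w = (\<lambda>q \<sigma>. g (Delta [\<sigma>] (dec q)))"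
  have \<delta>_app: "\<delta> q \<sigma> = h (f (Delta [\<sigma>] (dec q)))" for q \<sigma> by (simp add: \<delta>_def)
  have w_app: "w q \<sigma> = g (Delta [\<sigma>] (dec q))" for q \<sigma> by (simp add: w_def)
  define \<rho> where "\<rho> = (\<lambda>q. dec q [])"
  have ST: "S f \<alpha> l \<in> T" for \<alpha> by (simp add: T_def)
  have key: "dstar \<delta> (h l) \<alpha> = h (S f \<alpha> l) \<and> (\<forall>\<gamma>. l (\<alpha> @ \<gamma>) = wstar \<delta> w (h l) \<alpha> * S f \<alpha> l \<gamma>)" for \<alpha>
  proof (induction \<alpha> rule: rev_induct)
    case Nil then show ?case by (simp add: dstar_def wstar_def S_Nil)
  next
    case (snoc \<sigma> \<alpha>)
    have d: "dec (dstar \<delta> (h l) \<alpha>) = S f \<alpha> l" using snoc dec_h ST by simp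
    have fac': "g X * f X \<gamma> = X \<gamma>" for X \<gamma>
    proof -
      have "scal (g X) (f X) = X" using fac by (simp add: is_factorization_def)
      then have "scal (g X) (f X) \<gamma> = X \<gamma>" by simp
      then show ?thesis by (simp add: scal_def)
    qed
    show ?case
    proof
      show "dstar \<delta> (h l) (\<alpha> @ [\<sigma>]) = h (S f (\<alpha> @ [\<sigma>]) l)"
        by (simp add: dstar_snoc \<delta>_app d S_snoc)
      show "\<forall>\<gamma>. l ((\<alpha> @ [\<sigma>]) @ \<gamma>) = wstar \<delta> w (h l) (\<alpha> @ [\<sigma>]) * S f (\<alpha> @ [\<sigma>]) l \<gamma>"
      proof
        fix \<gamma>
        have "l ((\<alpha> @ [\<sigma>]) @ \<gamma>) = wstar \<delta> w (h l) \<alpha> * S f \<alpha> l (\<sigma> # \<gamma>)"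
          using snoc by simp
        also have "S f \<alpha> l (\<sigma> # \<gamma>) = Delta [\<sigma>] (S f \<alpha> l) \<gamma>" by (simp add: Delta_def)
        also have "\<dots> = g (Delta [\<sigma>] (S f \<alpha> l)) * f (Delta [\<sigma>] (S f \<alpha> l)) \<gamma>"
          by (simp add: fac')
        finally show "l ((\<alpha> @ [\<sigma>]) @ \<gamma>) = wstar \<delta> w (h l) (\<alpha> @ [\<sigma>]) * S f (\<alpha> @ [\<sigma>]) l \<gamma>"
          by (simp add: wstar_snoc w_app[of "dstar \<delta> (h l) \<alpha>" \<sigma>] d S_snoc mult.assoc)
      qed
    qed
  qed
  have "is_MDFA (h ` T) (h l) \<delta>"
  proof -
    have "f (Delta [\<sigma>] (dec q)) \<in> T" if "q \<in> h ` T" for q \<sigma>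
    proof -
      from that obtain \<alpha> where q: "q = h (S f \<alpha> l)" by (auto simp: T_def)
      have "f (Delta [\<sigma>] (dec q)) = S f (\<alpha> @ [\<sigma>]) l" using q dec_h ST by (simp add: S_snoc)
      then show ?thesis using ST by simp
    qed
    moreover have "l \<in> T" using ST[of "[]"] by (simp add: S_Nil)
    ultimately show ?thesis unfolding is_MDFA_def
      using finT by (simp add: \<delta>_app)
  qed
  moreover have "l = MDFA_lang (h l) 1 \<delta> w \<rho>"
  proof
    fix \<alpha>
    have "dec (dstar \<delta> (h l) \<alpha>) = S f \<alpha> l" using key dec_h ST by simp
    then show "l \<alpha> = MDFA_lang (h l) 1 \<delta> w \<rho> \<alpha>"
    proof -
      have "l (\<alpha> @ []) = wstar \<delta> w (h l) \<alpha> * S f \<alpha> l []" using key[of \<alpha>] by blast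
      then show ?thesis using \<open>dec (dstar \<delta> (h l) \<alpha>) = S f \<alpha> l\<close>
        by (simp add: MDFA_lang_def \<rho>_def)
    qed
  qed
  ultimately have fin: "is_MDFA (h ` T) (h l) \<delta> \<and> l = MDFA_lang (h l) 1 \<delta> w \<rho>" by (rule conjI)
  show ?thesis unfolding recognizable_def
    by (rule exI[of _ "h ` T"], rule exI[of _ "h l"], rule exI[of _ 1], rule exI[of _ \<delta>],
        rule exI[of _ w], rule exI[of _ \<rho>], rule fin)
qed

end
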